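(* For the population protocol USD and every $t\ge1$: (1) $\mathbb E_{t-1}[\psi_t]\le\psi_{t-1}\big(1-\frac1n\big)+\frac{\beta_{t-1}-\gamma_{t-1}}{n^2}$. (2) Conditioned on $\mathcal F_{t-1}$, $\psi_t-\mathbb E_{t-1}[\psi_t]$ satisfies the $\big(\frac{150}{n},\frac{150\beta_{t-1}}{n^2}\big)$-Bernstein condition.
   Context: Vertex set $V$, $|V|=n$; opinions in $\Sigma=[k]\cup\{\bot\}$ ($\bot$ = undecided). USD update rule: $\mathsf{update}(\sigma_1,\sigma_2)=\bot$ if $\sigma_1,\sigma_2\in[k]$ and $\sigma_1\ne\sigma_2$; $=\sigma_2$ if $\sigma_1=\bot$; $=\sigma_1$ otherwise. Population protocol USD: given $\mathrm{opn}_t\in\Sigma^V$, an ordered pair $(u,v)$ is chosen uniformly from $V\times V$ (with replacement), $\mathrm{opn}_{t+1}(u)=\mathsf{update}(\mathrm{opn}_t(u),\mathrm{opn}_t(v))$, and all other vertices keep their opinions. Notation: $\alpha_t(i)=|\{u:\mathrm{opn}_t(u)=i\}|/n$, $\beta_t=\sum_{i\in[k]}\alpha_t(i)$, $\gamma_t=\sum_{i\in[k]}\alpha_t(i)^2$, $\psi_t=\beta_t(2\beta_t-1)-\gamma_t$. $(\mathcal F_t)$ is the natural filtration; $\mathbb E_{t-1}$ is conditional expectation given $\mathcal F_{t-1}$. Bernstein condition: for $D,s\ge0$, $X$ satisfies the $(D,s)$-Bernstein condition if $\mathbb E[e^{\lambda X}]\le\exp\!\big(\frac{\lambda^2 s/2}{1-|\lambda|D/3}\big)$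 for all real $\lambda$ with $|\lambda|D<3$. Conditioned on $\mathcal F_{t-1}$: the same with $\mathbb E_{t-1}$, almost surely. *)

theory Defs
  imports "HOL-Probability.Probability"
begin

text \<open>Opinions: None is the undecided opinion (bot), Some i with 1 \<le> i \<le> k are the decided ones.\<close>

definition usd_opinions :: "nat \<Rightarrow> nat option set" where
  "usd_opinions k = insert None (Some ` {1..k})"

fun usd_update :: "nat option \<Rightarrow> nat option \<Rightarrow> nat option" where
  "usd_update (Some a) (Some b) = (if a \<noteq> b then None else Some a)"
| "usd_update None s2 = s2"
| "usd_update (Some a) None = Some a"

definition usd_step :: "('v \<Rightarrow> nat option) \<Rightarrow> 'v \<times> 'v \<Rightarrow> ('v \<Rightarrow> nat option)" where
  "usd_step c p = c (fst p := usd_update (c (fst p)) (c (snd p)))"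

definition usd_pair :: "('v::finite \<times> 'v) pmf" where
  "usd_pair = pmf_of_set UNIV"

definition usd_alpha :: "('v::finite \<Rightarrow> nat option) \<Rightarrow> nat \<Rightarrow> real" where
  "usd_alpha c i = real (card {u. c u = Some i}) / real CARD('v)"

definition usd_beta :: "nat \<Rightarrow> ('v::finite \<Rightarrow> nat option) \<Rightarrow> real" where
  "usd_beta k c = (\<Sum>i\<in>{1..k}. usd_alpha c i)"

definition usd_gamma :: "nat \<Rightarrow> ('v::finite \<Rightarrow> nat option) \<Rightarrow> real" where
  "usd_gamma k c = (\<Sum>i\<in>{1..k}. (usd_alpha c i)\<^sup>2)"

definition usd_psi :: "nat \<Rightarrow> ('v::finite \<Rightarrow> nat option) \<Rightarrow> real" where
  "usd_psi k c = usd_beta k c * (2 * usd_beta k c - 1) - usd_gamma k c"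

definition bernstein_condition :: "'a measure \<Rightarrow> ('a \<Rightarrow> real) \<Rightarrow> real \<Rightarrow> real \<Rightarrow> bool" where
  "bernstein_condition M X D s \<longleftrightarrow>
     (\<forall>l::real. \<bar>l\<bar> * D < 3 \<longrightarrow>
        (\<integral>x. exp (l * X x) \<partial>M) \<le> exp ((l\<^sup>2 * s / 2) / (1 - \<bar>l\<bar> * D / 3)))"

end

theory Submission imports Defs begin

lemma exp_le_quad:
  fixes x :: real assumes "\<bar>x\<bar> \<le> 1" shows "exp x \<le> 1 + x + x\<^sup>2"
proof (cases "0 \<le> x")
  case True then show ?thesis using exp_bound assms by auto
next
  case False
  define y where "y = - x"
  have y: "0 \<le> y" "y \<le> 1" using False assms y_def by auto
  have e: "1 + y + y\<^sup>2 / 2 \<le> exp y" using exp_lower_Taylor_quadratic y by auto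
  have p: "0 < 1 + y + y\<^sup>2 / 2" proof -
    have "0 \<le> y\<^sup>2 / 2" by simp
    then show ?thesis using y by linarith
  qed
  have "1 \<le> (1 - y + y\<^sup>2) * (1 + y + y\<^sup>2 / 2)"
  proof -
    have "(1 - y + y\<^sup>2) * (1 + y + y\<^sup>2 / 2) = 1 + y\<^sup>2/2 + y^3/2 + y^4/2"
      by (simp add: field_simps power2_eq_square power3_eq_cube power4_eq_xxxx)
    moreover have "0 \<le> y^3" "0 \<le> y^4" using y by auto
    moreover have "0 \<le> y\<^sup>2" by simp
    ultimately show ?thesis by linarith
  qed
  also have "\<dots> \<le> (1 - y + y\<^sup>2) * exp y"
  proof (rule mult_left_mono[OF e])
    have "0 \<le> y\<^sup>2" by simp
    then show "0 \<le> 1 - y + y\<^sup>2" using y by linarith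
  qed
  finally have "1 / exp y \<le> 1 - y + y\<^sup>2" by (simp add: divide_le_eq)
  then show ?thesis using y_def by (simp add: exp_minus field_simps)
qed

lemma bern_gen:
  fixes f :: "'a \<Rightarrow> real"
  assumes fin: "finite A" and ne: "A \<noteq> {}"
    and bnd: "\<And>p. p \<in> A \<Longrightarrow> \<bar>f p - a\<bar> \<le> M"
    and var: "(\<Sum>p\<in>A. (f p - a)\<^sup>2) / card A \<le> V"
    and l: "\<bar>l\<bar> * (2 * M) \<le> 1"
  shows "(\<Sum>p\<in>A. exp (l * (f p - (\<Sum>q\<in>A. f q) / card A))) / card A \<le> exp (l\<^sup>2 * V)"
proof -
  define N where "N = real (card A)"
  have N: "N > 0" using fin ne by (simp add: N_def card_gt_0_iff)
  define g where "g p = f p - a" for p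
  define m where "m = (\<Sum>q\<in>A. g q) / N"
  have sg: "(\<Sum>q\<in>A. g q) = (\<Sum>q\<in>A. f q) - N * a"
    by (simp add: g_def sum_subtractf N_def)
  have mf: "(\<Sum>q\<in>A. f q) / card A = a + m"
  proof -
    have "(\<Sum>q\<in>A. f q) = N * a + N * m" using N unfolding m_def sg by simp
    then show ?thesis using N unfolding N_def by (simp add: add_divide_distrib)
  qed
  have mb: "\<bar>m\<bar> \<le> M"
  proof -
    have "\<bar>\<Sum>q\<in>A. g q\<bar> \<le> (\<Sum>q\<in>A. \<bar>g q\<bar>)" by (rule sum_abs)
    also have "\<dots> \<le> (\<Sum>q\<in>A. M)" using bnd unfolding g_def by (intro sum_mono) auto
    also have "\<dots> = N * M" by (simp add: N_def)
    finally have "\<bar>\<Sum>q\<in>A. g q\<bar> \<le> N * M" .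
    then have "\<bar>\<Sum>q\<in>A. g q\<bar> / N \<le> M" using N by (simp add: pos_divide_le_eq mult.commute)
    then show ?thesis using N unfolding m_def by (simp add: abs_divide)
  qed
  have pt: "exp (l * (g p - m)) \<le> 1 + l * (g p - m) + l\<^sup>2 * (g p - m)\<^sup>2" if "p \<in> A" for p
  proof -
    have "\<bar>g p - m\<bar> \<le> \<bar>g p\<bar> + \<bar>m\<bar>" by (rule abs_triangle_ineq4)
    moreover have "\<bar>g p\<bar> \<le> M" using bnd[OF that] unfolding g_def .
    ultimately have "\<bar>g p - m\<bar> \<le> 2 * M" using mb by linarith
    then have "\<bar>l\<bar> * \<bar>g p - m\<bar> \<le> \<bar>l\<bar> * (2 * M)" by (intro mult_left_mono) auto
    then have "\<bar>l * (g p - m)\<bar> \<le> 1" using l by (simp add: abs_mult)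
    from exp_le_quad[OF this] show ?thesis by (simp add: power_mult_distrib)
  qed
  have s1: "(\<Sum>p\<in>A. (g p - m)) = 0" using N by (simp add: sum_subtractf m_def N_def)
  have s2: "(\<Sum>p\<in>A. (g p - m)\<^sup>2) = (\<Sum>p\<in>A. (g p)\<^sup>2) - N * m\<^sup>2"
  proof -
    have "(\<Sum>p\<in>A. (g p - m)\<^sup>2) = (\<Sum>p\<in>A. (g p)\<^sup>2 - 2 * m * g p + m\<^sup>2)"
      by (intro sum.cong) (auto simp: power2_diff)
    also have "\<dots> = (\<Sum>p\<in>A. (g p)\<^sup>2) - 2 * m * (\<Sum>p\<in>A. g p) + N * m\<^sup>2"
      by (simp add: sum.distrib sum_subtractf sum_distrib_left N_def)
    also have "(\<Sum>p\<in>A. g p) = N * m" using N by (simp add: m_def)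
    finally show ?thesis by (simp add: power2_eq_square)
  qed
  have "(\<Sum>p\<in>A. exp (l * (f p - (\<Sum>q\<in>A. f q) / card A))) = (\<Sum>p\<in>A. exp (l * (g p - m)))"
    by (simp add: mf g_def algebra_simps)
  also have "\<dots> \<le> (\<Sum>p\<in>A. 1 + l * (g p - m) + l\<^sup>2 * (g p - m)\<^sup>2)"
    by (intro sum_mono pt)
  also have "\<dots> = N + l * (\<Sum>p\<in>A. (g p - m)) + l\<^sup>2 * (\<Sum>p\<in>A. (g p - m)\<^sup>2)"
    by (simp add: sum.distrib sum_distrib_left N_def)
  also have "\<dots> = N + l\<^sup>2 * ((\<Sum>p\<in>A. (g p)\<^sup>2) - N * m\<^sup>2)"
    by (simp only: s1 s2)
  also have "\<dots> \<le> N + l\<^sup>2 * (\<Sum>p\<in>A. (g p)\<^sup>2)"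
  proof -
    have "0 \<le> l\<^sup>2 * (N * m\<^sup>2)" using N by simp
    then show ?thesis by (simp add: right_diff_distrib)
  qed
  finally have X: "(\<Sum>p\<in>A. exp (l * (f p - (\<Sum>q\<in>A. f q) / card A))) \<le> N + l\<^sup>2 * (\<Sum>p\<in>A. (g p)\<^sup>2)" .
  have "(\<Sum>p\<in>A. exp (l * (f p - (\<Sum>q\<in>A. f q) / card A))) / N \<le> (N + l\<^sup>2 * (\<Sum>p\<in>A. (g p)\<^sup>2)) / N"
    using X N by (intro divide_right_mono) auto
  also have "\<dots> = 1 + l\<^sup>2 * ((\<Sum>p\<in>A. (g p)\<^sup>2) / N)"
    using N by (simp add: add_divide_distrib)
  also have "\<dots> \<le> 1 + l\<^sup>2 * V" using mult_left_mono[OF var[folded N_def], of "l\<^sup>2"] by (simp add: g_def)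
  also have "\<dots> \<le> exp (l\<^sup>2 * V)" by simp
  finally show ?thesis by (simp add: N_def)
qed

lemma card_as_sum:
  "real (card {w::'v::finite. P w}) = (\<Sum>w\<in>UNIV. if P w then 1 else 0)"
  by (simp add: sum.If_cases)

lemma sum_upd:
  fixes F G :: "'v::finite \<Rightarrow> real"
  assumes "\<And>w. w \<noteq> u \<Longrightarrow> G w = F w"
  shows "(\<Sum>w\<in>UNIV. G w) = (\<Sum>w\<in>UNIV. F w) - F u + G u"
proof -
  have "(\<Sum>w\<in>UNIV. G w) = G u + (\<Sum>w\<in>UNIV - {u}. G w)" by (simp add: sum.remove)
  also have "(\<Sum>w\<in>UNIV - {u}. G w) = (\<Sum>w\<in>UNIV - {u}. F w)" using assms by (intro sum.cong) auto
  also have "(\<Sum>w\<in>UNIV - {u}. F w) = (\<Sum>w\<in>UNIV. F w) - F u" by (simp add: sum_diff1)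
  finally show ?thesis by simp
qed

lemma alpha_upd:
  fixes c :: "'v::finite \<Rightarrow> nat option"
  shows "usd_alpha (c(u := x)) i = usd_alpha c i - (if c u = Some i then 1 / real CARD('v) else 0)
            + (if x = Some i then 1 / real CARD('v) else 0)"
proof -
  have "real (card {w. (c(u := x)) w = Some i}) = real (card {w. c w = Some i})
          - (if c u = Some i then 1 else 0) + (if x = Some i then 1 else 0)"
    unfolding card_as_sum
    using sum_upd[where u=u and G="\<lambda>w. if (c(u := x)) w = Some i then 1 else 0"
        and F="\<lambda>w. if c w = Some i then 1 else 0"] by simp
  then show ?thesis unfolding usd_alpha_def by (simp add: diff_divide_distrib add_divide_distrib)
qed

lemma sum_group_opn:
  fixes c :: "'v::finite \<Rightarrow> 'b" and F :: "'b \<Rightarrow> real"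
  assumes "\<forall>u. c u \<in> S" "finite S"
  shows "(\<Sum>u\<in>UNIV. F (c u)) = (\<Sum>y\<in>S. real (card {u. c u = y}) * F y)"
proof -
  have "(\<Sum>u\<in>UNIV. F (c u)) = (\<Sum>y\<in>S. \<Sum>u\<in>{u \<in> UNIV. c u = y}. F (c u))"
    using assms by (intro sum.group[symmetric]) auto
  also have "\<dots> = (\<Sum>y\<in>S. real (card {u. c u = y}) * F y)"
    by (intro sum.cong) auto
  finally show ?thesis .
qed

lemma sum_poly3:
  fixes x :: "nat \<Rightarrow> real"
  shows "(\<Sum>i\<in>K. a * x i + b * (x i)\<^sup>2 + d * (x i)^3) = a * (\<Sum>i\<in>K. x i) + b * (\<Sum>i\<in>K. (x i)\<^sup>2) + d * (\<Sum>i\<in>K. (x i)^3)"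
  by (simp add: sum.distrib sum_distrib_left)

lemma prod_sum:
  fixes F :: "'v::finite \<times> 'v \<Rightarrow> real"
  shows "(\<Sum>p\<in>UNIV. F p) = (\<Sum>u\<in>UNIV. \<Sum>v\<in>UNIV. F (u, v))"
  using sum.cartesian_product[of "\<lambda>u v. F (u,v)" UNIV UNIV] by (simp add: UNIV_Times_UNIV)

lemma card_prod_univ: "real CARD('v::finite \<times> 'v) = real CARD('v) * real CARD('v)"
  by simp

definition dpsi :: "nat \<Rightarrow> ('v::finite \<Rightarrow> nat option) \<Rightarrow> nat option \<Rightarrow> nat option \<Rightarrow> real" where
  "dpsi k c x y = (case y of None \<Rightarrow> 0
     | Some j \<Rightarrow> (case x of None \<Rightarrow> (1 / real CARD('v)) * (4 * usd_beta k c - 1 - 2 * usd_alpha c j) + (1 / real CARD('v))\<^sup>2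
         | Some i \<Rightarrow> (if i \<noteq> j then (1 / real CARD('v)) * (1 - 4 * usd_beta k c + 2 * usd_alpha c i) + (1 / real CARD('v))\<^sup>2 else 0)))"

lemma sums_upd:
  fixes a :: "nat \<Rightarrow> real"
  assumes "i \<in> K" "finite K"
  shows "(\<Sum>m\<in>K. a m + (if i = m then e else 0)) = (\<Sum>m\<in>K. a m) + e"
    and "(\<Sum>m\<in>K. (a m + (if i = m then e else 0))\<^sup>2) = (\<Sum>m\<in>K. (a m)\<^sup>2) + 2 * a i * e + e\<^sup>2"
proof -
  show "(\<Sum>m\<in>K. a m + (if i = m then e else 0)) = (\<Sum>m\<in>K. a m) + e"
    using assms by (simp add: sum.distrib)
  have "(\<Sum>m\<in>K. (a m + (if i = m then e else 0))\<^sup>2) = (\<Sum>m\<in>K. (a m)\<^sup>2 + (if i = m then 2 * a i * e + e\<^sup>2 else 0))"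
    by (intro sum.cong) (auto simp: power2_sum)
  also have "\<dots> = (\<Sum>m\<in>K. (a m)\<^sup>2) + 2 * a i * e + e\<^sup>2"
    using assms by (simp add: sum.distrib)
  finally show "(\<Sum>m\<in>K. (a m + (if i = m then e else 0))\<^sup>2) = (\<Sum>m\<in>K. (a m)\<^sup>2) + 2 * a i * e + e\<^sup>2" .
qed

lemma psi_upd:
  fixes c c' :: "'v::finite \<Rightarrow> nat option"
  assumes al: "\<And>m. usd_alpha c' m = usd_alpha c m + (if i = m then e else 0)"
    and i: "i \<in> {1..k}"
  shows "usd_psi k c' = usd_psi k c + e * (4 * usd_beta k c - 1 - 2 * usd_alpha c i) + e\<^sup>2"
proof -
  have b: "usd_beta k c' = usd_beta k c + e"
    unfolding usd_beta_def al using sums_upd(1)[OF i] by simp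
  have g: "usd_gamma k c' = usd_gamma k c + 2 * usd_alpha c i * e + e\<^sup>2"
    unfolding usd_gamma_def al using sums_upd(2)[OF i] by simp
  show ?thesis unfolding usd_psi_def b g by (simp add: algebra_simps power2_eq_square)
qed

lemma opn_cases:
  assumes "x \<in> usd_opinions k"
  shows "x = None \<or> (\<exists>i\<in>{1..k}. x = Some i)"
  using assms by (auto simp: usd_opinions_def)

lemma step_psi:
  fixes c :: "'v::finite \<Rightarrow> nat option"
  assumes A: "\<forall>u. c u \<in> usd_opinions k"
  shows "usd_psi k (usd_step c (u, v)) = usd_psi k c + dpsi k c (c u) (c v)"
proof -
  define h where "h = 1 / real CARD('v)"
  consider (N) "c v = None" | (NS) j where "c u = None" "c v = Some j" "j \<in> {1..k}"
    | (SS) i j where "c u = Some i" "c v = Some j" "i \<in> {1..k}"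
    using opn_cases[OF A[rule_format, of u]] opn_cases[OF A[rule_format, of v]] by (elim disjE bexE) auto
  then show ?thesis
  proof cases
    case N
    have "usd_update (c u) (c v) = c u" using N by (cases "c u") auto
    then show ?thesis using N by (simp add: usd_step_def dpsi_def)
  next
    case NS
    have st: "usd_step c (u, v) = c(u := Some j)" using NS by (simp add: usd_step_def)
    have "usd_psi k (c(u := Some j)) = usd_psi k c + h * (4 * usd_beta k c - 1 - 2 * usd_alpha c j) + h\<^sup>2"
      by (rule psi_upd[OF _ NS(3)]) (simp add: alpha_upd NS h_def)
    then show ?thesis using NS st by (simp add: dpsi_def h_def)
  next
    case SS
    show ?thesis
    proof (cases "i = j")
      case True
      have "usd_step c (u, v) = c" using SS True by (simp add: usd_step_def fun_upd_idem)
      then show ?thesis using SS True by (simp add: dpsi_def)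
    next
      case False
      have st: "usd_step c (u, v) = c(u := None)" using SS False by (simp add: usd_step_def)
      have "usd_psi k (c(u := None)) = usd_psi k c + (- h) * (4 * usd_beta k c - 1 - 2 * usd_alpha c i) + (- h)\<^sup>2"
        by (rule psi_upd[OF _ SS(3)]) (simp add: alpha_upd SS h_def)
      then show ?thesis using SS st False by (simp add: dpsi_def h_def algebra_simps)
    qed
  qed
qed

lemma sum_opn:
  fixes g :: "nat option \<Rightarrow> real"
  shows "(\<Sum>y\<in>usd_opinions k. g y) = g None + (\<Sum>j\<in>{1..k}. g (Some j))"
proof -
  have "None \<notin> Some ` {1..k}" by auto
  then have "(\<Sum>y\<in>usd_opinions k. g y) = g None + (\<Sum>y\<in>Some ` {1..k}. g y)"
    unfolding usd_opinions_def by (simp add: sum.insert)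
  also have "(\<Sum>y\<in>Some ` {1..k}. g y) = (\<Sum>j\<in>{1..k}. g (Some j))"
    by (simp add: sum.reindex)
  finally show ?thesis .
qed

lemma E_pair:
  "measure_pmf.expectation (usd_pair :: ('v::finite \<times> 'v) pmf) f = (\<Sum>p\<in>UNIV. f p) / real CARD('v \<times> 'v)"
  unfolding usd_pair_def by (rule integral_pmf_of_set) auto

theorem mainTheorem14:
  fixes k :: nat and c :: "'v::finite \<Rightarrow> nat option"
  assumes "\<forall>u. c u \<in> usd_opinions k"
  shows "measure_pmf.expectation usd_pair (\<lambda>p. usd_psi k (usd_step c p))
           \<le> usd_psi k c * (1 - 1 / real CARD('v))
             + (usd_beta k c - usd_gamma k c) / (real CARD('v))\<^sup>2
         \<and> bernstein_condition (measure_pmf usd_pair)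
           (\<lambda>p. usd_psi k (usd_step c p)
                - measure_pmf.expectation usd_pair (\<lambda>q. usd_psi k (usd_step c q)))
           (150 / real CARD('v)) (150 * usd_beta k c / (real CARD('v))\<^sup>2)"
proof -
  note A = assms
  define n where "n = real CARD('v)"
  define h where "h = 1 / n"
  define K where "K = {1..k}"
  define al where "al = usd_alpha c"
  define be where "be = usd_beta k c"
  define ga where "ga = usd_gamma k c"
  define ka where "ka = (\<Sum>i\<in>K. (al i)^3)"
  define ps where "ps = usd_psi k c"
  define N where "N y = real (card {u. c u = y})" for y
  define S where "S = usd_opinions k"
  have n0: "n > 0" unfolding n_def by simp
  have n1: "n \<ge> 1" unfolding n_def by (simp add: Suc_le_eq)
  have h0: "h > 0" "h \<le> 1" using n0 n1 by (auto simp: h_def)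
  have nh: "n * h = 1" using n0 by (simp add: h_def)
  have finS: "finite S" unfolding S_def usd_opinions_def by simp
  have AS: "\<forall>u. c u \<in> S" using A by (simp add: S_def)
  have be_def': "be = (\<Sum>i\<in>K. al i)" by (simp add: be_def usd_beta_def K_def al_def)
  have ga_def': "ga = (\<Sum>i\<in>K. (al i)\<^sup>2)" by (simp add: ga_def usd_gamma_def K_def al_def)
  have NS: "N (Some i) = n * al i" for i
    using n0 by (simp add: N_def al_def usd_alpha_def n_def)
  have grp: "(\<Sum>u\<in>UNIV. F (c u)) = (\<Sum>y\<in>S. N y * F y)" for F :: "nat option \<Rightarrow> real"
    unfolding N_def by (rule sum_group_opn[OF AS finS])
  have sumS: "(\<Sum>y\<in>S. g y) = g None + (\<Sum>j\<in>K. g (Some j))" for g :: "nat option \<Rightarrow> real"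
    unfolding S_def K_def by (rule sum_opn)
  have NN: "N None = n * (1 - be)"
  proof -
    have "(\<Sum>u\<in>(UNIV::'v set). (1::real)) = (\<Sum>y\<in>S. N y)" using grp[of "\<lambda>_. 1"] by simp
    then have "n = N None + (\<Sum>j\<in>K. n * al j)" unfolding sumS by (simp add: NS n_def)
    then show ?thesis unfolding be_def' by (simp add: sum_distrib_left algebra_simps)
  qed
  have al0: "al i \<ge> 0" for i by (simp add: al_def usd_alpha_def)
  have albe: "al i \<le> be" if "i \<in> K" for i
    unfolding be_def' using that al0 by (intro member_le_sum) (auto simp: K_def)
  have be1: "be \<le> 1"
  proof -
    have "N None \<ge> 0" by (simp add: N_def)
    then show ?thesis using NN n0 by (simp add: zero_le_mult_iff)
  qed
  have be0: "be \<ge> 0" unfolding be_def' using al0 by (simp add: sum_nonneg)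
  have dpsiN: "dpsi k c x None = 0" for x by (simp add: dpsi_def)
  have dpsiNS: "dpsi k c None (Some j) = h * (4 * be - 1 - 2 * al j) + h\<^sup>2" for j
    by (simp add: dpsi_def h_def n_def be_def al_def)
  have dpsiSS: "dpsi k c (Some i) (Some j) = (if i \<noteq> j then h * (1 - 4 * be + 2 * al i) + h\<^sup>2 else 0)" for i j
    by (simp add: dpsi_def h_def n_def be_def al_def)
  have cardP: "real CARD('v \<times> 'v) = n * n" by (simp add: n_def)
  have stp: "usd_psi k (usd_step c p) = ps + dpsi k c (c (fst p)) (c (snd p))" for p
    using step_psi[OF A, of "fst p" "snd p"] by (simp add: ps_def)
  define Q where "Q = (1 - be) * (\<Sum>j\<in>K. al j * (h * (4 * be - 1 - 2 * al j) + h\<^sup>2))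
      + (\<Sum>i\<in>K. al i * (h * (1 - 4 * be + 2 * al i) + h\<^sup>2) * (be - al i))"
  have inner_S: "(\<Sum>y\<in>S. N y * dpsi k c (Some i) y) = n * ((h * (1 - 4 * be + 2 * al i) + h\<^sup>2) * (be - al i))"
    if "i \<in> K" for i
  proof -
    have "(\<Sum>y\<in>S. N y * dpsi k c (Some i) y) = (\<Sum>j\<in>K. n * al j * (if i \<noteq> j then h * (1 - 4 * be + 2 * al i) + h\<^sup>2 else 0))"
      unfolding sumS by (simp add: dpsiN NS dpsiSS)
    also have "\<dots> = (\<Sum>j\<in>K. n * (h * (1 - 4 * be + 2 * al i) + h\<^sup>2) * al j + (if i = j then - n * (h * (1 - 4 * be + 2 * al i) + h\<^sup>2) * al i else 0))"
      by (intro sum.cong) auto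
    also have "\<dots> = n * (h * (1 - 4 * be + 2 * al i) + h\<^sup>2) * be - n * (h * (1 - 4 * be + 2 * al i) + h\<^sup>2) * al i"
      using that by (simp add: sum.distrib sum_distrib_left[symmetric] be_def' K_def)
    finally show ?thesis by (simp add: algebra_simps)
  qed
  have inner_N: "(\<Sum>y\<in>S. N y * dpsi k c None y) = n * (\<Sum>j\<in>K. al j * (h * (4 * be - 1 - 2 * al j) + h\<^sup>2))"
    unfolding sumS by (simp add: dpsiN NS dpsiNS sum_distrib_left mult.assoc)
  have total: "(\<Sum>p\<in>UNIV. dpsi k c (c (fst p)) (c (snd p))) = n * n * Q"
  proof -
    have "(\<Sum>p\<in>UNIV. dpsi k c (c (fst p)) (c (snd p))) = (\<Sum>u\<in>UNIV. \<Sum>v\<in>UNIV. dpsi k c (c u) (c v))"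
      by (simp add: prod_sum)
    also have "\<dots> = (\<Sum>u\<in>UNIV. (\<lambda>x. \<Sum>y\<in>S. N y * dpsi k c x y) (c u))"
      by (simp add: grp)
    also have "\<dots> = (\<Sum>x\<in>S. N x * (\<Sum>y\<in>S. N y * dpsi k c x y))"
      by (rule grp)
    also have "\<dots> = N None * (n * (\<Sum>j\<in>K. al j * (h * (4 * be - 1 - 2 * al j) + h\<^sup>2)))
        + (\<Sum>i\<in>K. n * al i * (n * ((h * (1 - 4 * be + 2 * al i) + h\<^sup>2) * (be - al i))))"
      unfolding sumS[of "\<lambda>x. N x * (\<Sum>y\<in>S. N y * dpsi k c x y)"] inner_N NS
      by (intro arg_cong2[where f="(+)"] refl sum.cong) (simp_all add: inner_S)
    also have "\<dots> = n * n * Q"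
      unfolding Q_def NN by (simp add: sum_distrib_left algebra_simps)
    finally show ?thesis .
  qed
  have Qeq: "Q = - h * ps + h\<^sup>2 * (be - ga) - 2 * h * (\<Sum>i\<in>K. al i * (2 * be - 1 - al i)\<^sup>2)"
  proof -
    define c0 where "c0 = h * (1 - 4 * be) + h\<^sup>2"
    have s1: "(\<Sum>j\<in>K. al j * (h * (4 * be - 1 - 2 * al j) + h\<^sup>2))
        = (h * (4 * be - 1) + h\<^sup>2) * be + (- 2 * h) * ga + 0 * ka"
      unfolding be_def' ga_def' ka_def sum_poly3[symmetric]
      by (intro sum.cong) (simp_all add: algebra_simps power2_eq_square)
    have s2: "(\<Sum>i\<in>K. al i * (h * (1 - 4 * be + 2 * al i) + h\<^sup>2) * (be - al i))
        = (c0 * be) * be + (2 * h * be - c0) * ga + (- 2 * h) * ka"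
    proof -
      have "(\<Sum>i\<in>K. al i * (h * (1 - 4 * be + 2 * al i) + h\<^sup>2) * (be - al i))
          = (\<Sum>i\<in>K. (c0 * be) * al i + (2 * h * be - c0) * (al i)\<^sup>2 + (- 2 * h) * (al i)^3)"
        by (intro sum.cong) (simp_all add: c0_def algebra_simps power2_eq_square power3_eq_cube)
      also have "\<dots> = (c0 * be) * (\<Sum>i\<in>K. al i) + (2 * h * be - c0) * (\<Sum>i\<in>K. (al i)\<^sup>2) + (- 2 * h) * (\<Sum>i\<in>K. (al i)^3)"
        by (rule sum_poly3)
      finally show ?thesis unfolding be_def'[symmetric] ga_def'[symmetric] ka_def[symmetric] .
    qed
    have s3: "(\<Sum>i\<in>K. al i * (2 * be - 1 - al i)\<^sup>2) = (2 * be - 1)\<^sup>2 * be + (- 2 * (2 * be - 1)) * ga + 1 * ka"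
    proof -
      have "(\<Sum>i\<in>K. al i * (2 * be - 1 - al i)\<^sup>2)
          = (\<Sum>i\<in>K. (2 * be - 1)\<^sup>2 * al i + (- 2 * (2 * be - 1)) * (al i)\<^sup>2 + 1 * (al i)^3)"
        by (intro sum.cong) (simp_all add: algebra_simps power2_eq_square power3_eq_cube)
      also have "\<dots> = (2 * be - 1)\<^sup>2 * (\<Sum>i\<in>K. al i) + (- 2 * (2 * be - 1)) * (\<Sum>i\<in>K. (al i)\<^sup>2) + 1 * (\<Sum>i\<in>K. (al i)^3)"
        by (rule sum_poly3)
      finally show ?thesis unfolding be_def'[symmetric] ga_def'[symmetric] ka_def[symmetric] .
    qed
    show ?thesis unfolding Q_def s1 s2 s3 ps_def usd_psi_def be_def[symmetric] ga_def[symmetric] c0_def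
      by (simp add: algebra_simps power2_eq_square)
  qed
  have Esum: "(\<Sum>p\<in>UNIV. usd_psi k (usd_step c p)) = n * n * ps + n * n * Q"
    unfolding stp by (simp add: sum.distrib total n_def)
  have EE: "measure_pmf.expectation usd_pair (\<lambda>p. usd_psi k (usd_step c p)) = ps + Q"
    unfolding E_pair cardP Esum using n0 by (simp add: field_simps)
  have part1: "measure_pmf.expectation usd_pair (\<lambda>p. usd_psi k (usd_step c p))
           \<le> usd_psi k c * (1 - 1 / real CARD('v))
             + (usd_beta k c - usd_gamma k c) / (real CARD('v))\<^sup>2"
  proof -
    have "0 \<le> (\<Sum>i\<in>K. al i * (2 * be - 1 - al i)\<^sup>2)" using al0 by (intro sum_nonneg) simp
    then have "Q \<le> - h * ps + h\<^sup>2 * (be - ga)" unfolding Qeq using h0 by simp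
    moreover have "h\<^sup>2 * (be - ga) = (usd_beta k c - usd_gamma k c) / (real CARD('v))\<^sup>2"
      by (simp add: h_def n_def be_def ga_def power_divide)
    ultimately show ?thesis unfolding EE by (simp add: ps_def h_def n_def algebra_simps)
  qed
  have dbnd: "\<bar>dpsi k c x y\<bar> \<le> 4 * h" if "x \<in> S" "y \<in> S" for x y
  proof -
    have hh: "h\<^sup>2 \<le> h" using h0 by (simp add: power2_eq_square mult_left_le_one_le)
    have key: "\<bar>h * X + h\<^sup>2\<bar> \<le> 4 * h" if "\<bar>X\<bar> \<le> 3" for X
    proof -
      have "\<bar>h * X + h\<^sup>2\<bar> \<le> h * \<bar>X\<bar> + h\<^sup>2" using h0 by (simp add: abs_mult abs_triangle_ineq[THEN order_trans])
      also have "\<dots> \<le> h * 3 + h" using that h0 hh by (intro add_mono mult_left_mono) auto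
      finally show ?thesis by simp
    qed
    show ?thesis
    proof (cases y)
      case None then show ?thesis using h0 by (simp add: dpsiN)
    next
      case (Some j)
      have j: "j \<in> K" using that(2) Some by (auto simp: S_def usd_opinions_def K_def)
      show ?thesis
      proof (cases x)
        case None
        show ?thesis unfolding None Some dpsiNS
          using albe[OF j] al0[of j] be0 be1 by (intro key) auto
      next
        case (Some i)
        have i: "i \<in> K" using that(1) Some by (auto simp: S_def usd_opinions_def K_def)
        show ?thesis unfolding Some \<open>y = Some j\<close> dpsiSS
          using albe[OF i] al0[of i] be0 be1 h0 by (auto intro!: key)
      qed
    qed
  qed
  have dsq: "(dpsi k c x y)\<^sup>2 \<le> 16 * h\<^sup>2 * (if y = None then 0 else 1)" if "x \<in> S" "y \<in> S" for x y
  proof (cases "y = None")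
    case True then show ?thesis by (simp add: dpsiN)
  next
    case False
    have "(dpsi k c x y)\<^sup>2 = \<bar>dpsi k c x y\<bar>\<^sup>2" by simp
    also have "\<dots> \<le> (4 * h)\<^sup>2" using dbnd[OF that] by (intro power_mono) auto
    finally have "(dpsi k c x y)\<^sup>2 \<le> 16 * h\<^sup>2" by (simp add: power_mult_distrib)
    moreover have "(if y = None then 0 else 1::real) = 1" using False by simp
    ultimately show ?thesis by (simp only:)
  qed
  have cntdec: "(\<Sum>v\<in>UNIV. if c v = None then 0 else 1::real) = n * be"
  proof -
    have "(\<Sum>v\<in>UNIV. if c v = None then 0 else 1::real) = (\<Sum>y\<in>S. N y * (if y = None then 0 else 1))"
      using grp[of "\<lambda>y. if y = None then 0 else 1"] by simp
    then show ?thesis unfolding sumS by (simp add: NS be_def' sum_distrib_left)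
  qed
  have varb: "(\<Sum>p\<in>UNIV. (usd_psi k (usd_step c p) - ps)\<^sup>2) / real (card (UNIV :: ('v \<times> 'v) set)) \<le> 16 * h\<^sup>2 * be"
  proof -
    have "(\<Sum>p\<in>UNIV. (usd_psi k (usd_step c p) - ps)\<^sup>2) = (\<Sum>u\<in>UNIV. \<Sum>v\<in>UNIV. (dpsi k c (c u) (c v))\<^sup>2)"
      unfolding stp by (simp add: prod_sum)
    also have "\<dots> \<le> (\<Sum>u\<in>(UNIV::'v set). \<Sum>v\<in>UNIV. 16 * h\<^sup>2 * (\<lambda>y. if y = None then 0 else 1::real) (c v))"
      using AS by (intro sum_mono dsq) auto
    also have "\<dots> = n * (16 * h\<^sup>2 * (n * be))"
      by (simp add: sum_distrib_left[symmetric] cntdec n_def)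
    finally have "(\<Sum>p\<in>UNIV. (usd_psi k (usd_step c p) - ps)\<^sup>2) \<le> n * n * (16 * h\<^sup>2 * be)"
      by (simp add: algebra_simps)
    then show ?thesis using n0 cardP by (simp add: divide_le_eq mult.commute)
  qed
  have part2: "bernstein_condition (measure_pmf usd_pair)
           (\<lambda>p. usd_psi k (usd_step c p)
                - measure_pmf.expectation usd_pair (\<lambda>q. usd_psi k (usd_step c q)))
           (150 / real CARD('v)) (150 * usd_beta k c / (real CARD('v))\<^sup>2)"
    unfolding bernstein_condition_def
  proof (intro allI impI)
    fix l :: real
    assume l: "\<bar>l\<bar> * (150 / real CARD('v)) < 3"
    have lh: "\<bar>l\<bar> * h * 150 < 3" using l by (simp add: h_def n_def)
    have l8: "\<bar>l\<bar> * (2 * (4 * h)) \<le> 1"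
    proof -
      have "\<bar>l\<bar> * (2 * (4 * h)) = 8 * (\<bar>l\<bar> * h)" by simp
      moreover have "0 \<le> \<bar>l\<bar> * h" using h0 by simp
      ultimately show ?thesis using lh by linarith
    qed
    have bg: "(\<Sum>p\<in>UNIV. exp (l * (usd_psi k (usd_step c p) - (\<Sum>q\<in>UNIV. usd_psi k (usd_step c q)) / card (UNIV :: ('v \<times> 'v) set))))
        / card (UNIV :: ('v \<times> 'v) set) \<le> exp (l\<^sup>2 * (16 * h\<^sup>2 * be))"
      by (rule bern_gen[OF _ _ _ varb l8]) (use AS dbnd in \<open>auto simp: stp\<close>)
    define den where "den = 1 - \<bar>l\<bar> * (150 / real CARD('v)) / 3"
    have q: "0 \<le> \<bar>l\<bar> * (150 / real CARD('v))" by simp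
    have den3: "\<And>t::real. t < 3 \<Longrightarrow> 0 \<le> t \<Longrightarrow> 0 < 1 - t / 3 \<and> 1 - t / 3 \<le> 1" by simp
    have den1: "0 < den" unfolding den_def using den3[OF l q] by blast
    have den2: "den \<le> 1" unfolding den_def using den3[OF l q] by blast
    note den = den1 den2
    have t0: "0 \<le> l\<^sup>2 * h\<^sup>2 * be" using be0 by simp
    have "l\<^sup>2 * (16 * h\<^sup>2 * be) = 16 * (l\<^sup>2 * h\<^sup>2 * be)" by (simp add: algebra_simps)
    also have "\<dots> \<le> 75 * (l\<^sup>2 * h\<^sup>2 * be)" using t0 by linarith
    also have "\<dots> \<le> 75 * (l\<^sup>2 * h\<^sup>2 * be) / den" 
    proof -
      have "75 * (l\<^sup>2 * h\<^sup>2 * be) * den \<le> 75 * (l\<^sup>2 * h\<^sup>2 * be)"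
        using den t0 by (intro mult_right_le_one_le) auto
      then show ?thesis using den by (simp add: le_divide_eq)
    qed
    also have "\<dots> = l\<^sup>2 * (150 * usd_beta k c / (real CARD('v))\<^sup>2) / 2 / den"
      by (simp add: h_def n_def be_def power_divide)
    finally have "exp (l\<^sup>2 * (16 * h\<^sup>2 * be)) \<le> exp (l\<^sup>2 * (150 * usd_beta k c / (real CARD('v))\<^sup>2) / 2 / den)"
      by simp
    from order_trans[OF bg this] have fin: "(\<Sum>p\<in>UNIV. exp (l * (usd_psi k (usd_step c p) - (\<Sum>q\<in>UNIV. usd_psi k (usd_step c q)) / card (UNIV :: ('v \<times> 'v) set))))
        / card (UNIV :: ('v \<times> 'v) set) \<le> exp (l\<^sup>2 * (150 * usd_beta k c / (real CARD('v))\<^sup>2) / 2 / den)" .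
    then show "(\<integral>x. exp (l * (usd_psi k (usd_step c x) - measure_pmf.expectation usd_pair (\<lambda>q. usd_psi k (usd_step c q)))) \<partial>measure_pmf usd_pair)
        \<le> exp (l\<^sup>2 * (150 * usd_beta k c / (real CARD('v))\<^sup>2) / 2 / (1 - \<bar>l\<bar> * (150 / real CARD('v)) / 3))"
      unfolding E_pair den_def by simp
  qed
  show ?thesis using part1 part2 by blast
qed

end
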